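(* Let $T:\mathbb N\to\mathbb N$ satisfy $T(n)\ge n$. If every $f\in\mathbf{FPC}$ satisfies $\mathrm{sz}(f(\tilde v))=O(T(\mathrm{sz}(\tilde v)))$, then $\mathbf{FPC}=\mathbf{FPC}[T]$.
   Context: CorePolyC. Types are $\mathtt{iint},\mathtt{int},\mathtt{bool}$; $\mathsf{Int}=\{\mathtt{iint},\mathtt{int}\}$, ordered by $\mathtt{iint}\preccurlyeq\mathtt{int}$. Values are unbounded integers ($\mathbb Z$) and booleans $\#t,\#f$. Expressions: variables $x$; constants (nonempty decimal digit strings denoting natural numbers; $\mathtt{true}$, $\mathtt{false}$); operator applications $\mathtt{op}(e_1,\dots,e_m)$; parenthesized $(e)$. Operators and semantics: unary $-$ (negation); binary $+,-,/,\%$ (integer addition, subtraction, division, remainder, with division and remainder by $0$ returning $0$); $\mathtt{size}$, with $\mathtt{size}(v)=\lceil\log_2(\mathrm{abs}(v)+1)\rceil$; comparisons $\texttt{>=},\texttt{<=},\texttt{>},\texttt{<},\texttt{==},\texttt{!=}$ on integers returning booleans; boolean $\texttt{!},\texttt{\&\&},\texttt{||}$. Statements: declaration $t\ x;$; assignment $x=e;$; block $\{s_1\dots s_m\}$; conditional $\mathbf{if}(e)\ s_1\ \mathbf{else}\ s_2$; loop $\mathbf{for}(x<\mathtt{size}(e))\ s$ (loop bounds are always syntactically of the form $\mathtt{size}(e)$). A program is $\mathbf{int\ main}(\mathbf{int}\ x_1,\dots,\mathbf{int}\ x_m)\{s_1\dots s_k\ \mathbf{return}\ e;\}$. Semantics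 (big-step). A store $\Sigma$ is a finite partial map from variables to values; $\Sigma[x\mapsto v]$ is the update. $\Sigma\vdash e\Downarrow v$: a variable $x\in\mathrm{dom}\,\Sigma$ evaluates to $\Sigma(x)$, constants to their value, $\mathtt{op}(e_1,\dots,e_m)$ to $\mathtt{op}$ applied to the values of the $e_i$. $\Sigma\vdash s\Downarrow\Sigma'$: $t\ x;$ gives $\Sigma[x\mapsto 0]$ if $t\in\mathsf{Int}$ and $\Sigma[x\mapsto\#f]$ if $t=\mathtt{bool}$; $x=e;$ (with $x\in\mathrm{dom}\,\Sigma$) gives $\Sigma[x\mapsto v]$ where $\Sigma\vdash e\Downarrow v$; a sequence or block executes its statements in order threading the store (a block returns the final store); a conditional evaluates its guard to a boolean and executes the corresponding branch; $\mathbf{for}(x<e)\ s$ evaluates $e$ once to an integer $i$, sets $\Sigma_0=\Sigma$, executes $s$ from $\Sigma_j[x\mapsto j]$ obtaining $\Sigma_{j+1}$ for $j=0,\dots,i-1$, and ends in $\Sigma_i$ (i.e. in $\Sigma$ if $i\le 0$). A program on inputs $v_1,\dots,v_m$ runs its statements from the store $[x_1\mapsto v_1,\dots,x_m\mapsto v_m]$ and outputs the value of its return expression in the resulting store. Type system. A typing environment $\Gamma$ is a finite partial map from variables to types; $\ell\in\{\#t,\#f\}$ is the loop indicator. Expression typing $\Gamma,\ell\vdash e:t$: a variable $x\in\mathrm{dom}\,\Gamma$ has type $\Gamma(x)$; digit literals have type $\mathtt{iint}$, $\mathtt{true},\mathtt{false}$ have type $\mathtt{bool}$; $\texttt{!},\texttt{\&\&},\texttt{||}$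 take $\mathtt{bool}$ arguments to $\mathtt{bool}$; comparisons take arguments with types in $\mathsf{Int}$ to $\mathtt{bool}$; $+,-,/,\%$ take arguments with types in $\mathsf{Int}$ to their supremum under $\preccurlyeq$ ($\mathtt{iint}$ iff all arguments are $\mathtt{iint}$); $\mathtt{size}$ takes only an $\mathtt{iint}$ argument, giving $\mathtt{iint}$; parentheses preserve types. Statement typing $\Gamma,\ell\vdash s:\Gamma'$: $t\ x;$ is typable iff $x\notin\mathrm{dom}\,\Gamma$ and not($\ell=\#t$ and $t=\mathtt{iint}$), giving $\Gamma[x\mapsto t]$; $x=e;$ is typable iff $x\in\mathrm{dom}\,\Gamma$, not($\ell=\#t$ and $\Gamma(x)=\mathtt{iint}$), and $\Gamma,\ell\vdash e:t$ with $t,\Gamma(x)$ both in $\mathsf{Int}$ or both $\mathtt{bool}$, giving $\Gamma$; a sequence $s_1\dots s_m$ threads $\Gamma_0=\Gamma$, $\Gamma_{i-1},\ell\vdash s_i:\Gamma_i$, giving $\Gamma_m$; a block $\{\tilde s\}$ is typable if its sequence is, giving $\Gamma$; a conditional needs a guard of type $\mathtt{bool}$ and both branches typable under $\Gamma,\ell$, giving $\Gamma$; $\mathbf{for}(x<e)\ s$ needs $\Gamma,\ell\vdash e:\mathtt{iint}$, $x\notin\mathrm{dom}\,\Gamma$, and $\Gamma[x\mapsto\mathtt{iint}],\#t\vdash s:\Gamma'$ for some $\Gamma'$, giving $\Gamma$. A program is well-typed if its statements are typable starting from $[x_1\mapsto\mathtt{int},\dots,x_m\mapsto\mathtt{int}]$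 with $\ell=\#f$, ending in some $\Gamma'$, and its return expression has a type in $\mathsf{Int}$ under $\Gamma',\#f$. A well-typed program $p$ with $m$ inputs computes a total function $[\![p]\!]:\mathbb Z^m\to\mathbb Z$; $\mathbf{FPC}$ is the set of all such functions. Sizes: $\mathrm{sz}(v)=\lceil\log_2(\mathrm{abs}(v)+1)\rceil$ for $v\in\mathbb Z$, $\mathrm{sz}(\#t)=\mathrm{sz}(\#f)=1$, $\mathrm{sz}(v_1,\dots,v_m)=\sum_i\mathrm{sz}(v_i)$. Instruction count (cost semantics) $\mathrm{ic}$: a variable or constant costs $1$; a parenthesized expression costs $1$ plus its content; $\mathtt{op}(e_1,\dots,e_m)$ costs $1$ plus the costs of the $e_i$; a declaration costs $1$; an assignment costs $1$ plus the cost of its expression; a block costs $1$ plus the cost of its sequence; a sequence costs the sum of its statements' costs; a conditional costs the guard's cost plus the cost of the executed branch; a loop costs the cost of evaluating its bound plus the sum of the costs of all executed iterations of its body; a program costs its statements' cost plus the cost of its return expression. $\mathrm{ic}(p,\tilde v)$ is the cost of running $p$ on $\tilde v$. $\mathbf{FPC}[T]$ is the set of $f\in\mathbf{FPC}$ computed by some well-typed program $p$ with $\mathrm{ic}(p,\tilde v)=O(T(\mathrm{sz}(\tilde v)))$. *)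

theory Defs
  imports Complex_Main
begin

type_synonym vname = string

datatype ty = TIInt | TInt | TBool

datatype val = VI int | VB bool

datatype oper =
    ONeg | OPlus | OMinus | ODiv | OMod | OSize
  | OGe | OLe | OGt | OLt | OEq | ONe
  | ONot | OAnd | OOr

datatype expr =
    Var vname
  | Num nat              \<comment> \<open>nonempty decimal digit string, identified with the natural number it denotes\<close>
  | Tru
  | Fls
  | Op oper "expr list"
  | Paren expr

datatype stmt =
    Decl ty vname
  | Assign vname expr
  | Block "stmt list"
  | If expr stmt stmt
  | For vname expr stmt  \<comment> \<open>For x e s  stands for  for(x < size(e)) s\<close>

record prog =
  params :: "vname list"
  body   :: "stmt list"
  ret    :: expr

definition sz_int :: "int \<Rightarrow> nat" where
  "sz_int v = nat \<lceil>log 2 (real_of_int (\<bar>v\<bar> + 1))\<rceil>"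

fun sz_val :: "val \<Rightarrow> nat" where
  "sz_val (VI v) = sz_int v"
| "sz_val (VB b) = 1"

definition sz_ints :: "int list \<Rightarrow> nat" where
  "sz_ints vs = sum_list (map sz_int vs)"

(* integer division: C-style truncation toward zero; division/remainder by 0 give 0 *)
definition cdiv :: "int \<Rightarrow> int \<Rightarrow> int" where
  "cdiv a b = (if b = 0 then 0 else sgn a * sgn b * (\<bar>a\<bar> div \<bar>b\<bar>))"

definition cmod :: "int \<Rightarrow> int \<Rightarrow> int" where
  "cmod a b = (if b = 0 then 0 else a - b * cdiv a b)"

fun as_int :: "val \<Rightarrow> int option" where
  "as_int (VI a) = Some a" | "as_int (VB b) = None"

fun as_bool :: "val \<Rightarrow> bool option" where
  "as_bool (VB b) = Some b" | "as_bool (VI a) = None"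

definition un :: "('a \<Rightarrow> 'b) \<Rightarrow> ('c \<Rightarrow> 'a option) \<Rightarrow> 'c list \<Rightarrow> 'b option" where
  "un g p xs = (if length xs = 1 then map_option g (p (xs ! 0)) else None)"

definition bin :: "('a \<Rightarrow> 'a \<Rightarrow> 'b) \<Rightarrow> ('c \<Rightarrow> 'a option) \<Rightarrow> 'c list \<Rightarrow> 'b option" where
  "bin g p xs = (if length xs = 2 then
      (case (p (xs ! 0), p (xs ! 1)) of (Some a, Some b) \<Rightarrow> Some (g a b) | _ \<Rightarrow> None) else None)"

fun op_sem :: "oper \<Rightarrow> val list \<Rightarrow> val option" where
  "op_sem ONeg vs = un (\<lambda>a. VI (- a)) as_int vs"
| "op_sem OPlus vs = bin (\<lambda>a b. VI (a + b)) as_int vs"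
| "op_sem OMinus vs = bin (\<lambda>a b. VI (a - b)) as_int vs"
| "op_sem ODiv vs = bin (\<lambda>a b. VI (cdiv a b)) as_int vs"
| "op_sem OMod vs = bin (\<lambda>a b. VI (cmod a b)) as_int vs"
| "op_sem OSize vs = un (\<lambda>a. VI (int (sz_int a))) as_int vs"
| "op_sem OGe vs = bin (\<lambda>a b. VB (a \<ge> b)) as_int vs"
| "op_sem OLe vs = bin (\<lambda>a b. VB (a \<le> b)) as_int vs"
| "op_sem OGt vs = bin (\<lambda>a b. VB (a > b)) as_int vs"
| "op_sem OLt vs = bin (\<lambda>a b. VB (a < b)) as_int vs"
| "op_sem OEq vs = bin (\<lambda>a b. VB (a = b)) as_int vs"
| "op_sem ONe vs = bin (\<lambda>a b. VB (a \<noteq> b)) as_int vs"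
| "op_sem ONot vs = un (\<lambda>a. VB (\<not> a)) as_bool vs"
| "op_sem OAnd vs = bin (\<lambda>a b. VB (a \<and> b)) as_bool vs"
| "op_sem OOr vs = bin (\<lambda>a b. VB (a \<or> b)) as_bool vs"

type_synonym store = "vname \<Rightarrow> val option"

fun default_val :: "ty \<Rightarrow> val" where
  "default_val TBool = VB False"
| "default_val _ = VI 0"

(* evalE \<Sigma> e v c :  \<Sigma> \<turnstile> e \<Down> v  with instruction count c *)
inductive evalE :: "store \<Rightarrow> expr \<Rightarrow> val \<Rightarrow> nat \<Rightarrow> bool"
  and evalEs :: "store \<Rightarrow> expr list \<Rightarrow> val list \<Rightarrow> nat \<Rightarrow> bool" where
  EVar: "\<Sigma> x = Some v \<Longrightarrow> evalE \<Sigma> (Var x) v 1"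
| ENum: "evalE \<Sigma> (Num n) (VI (int n)) 1"
| ETru: "evalE \<Sigma> Tru (VB True) 1"
| EFls: "evalE \<Sigma> Fls (VB False) 1"
| EParen: "evalE \<Sigma> e v c \<Longrightarrow> evalE \<Sigma> (Paren e) v (c + 1)"
| EOp: "evalEs \<Sigma> es vs c \<Longrightarrow> op_sem f vs = Some v \<Longrightarrow> evalE \<Sigma> (Op f es) v (c + 1)"
| ENil: "evalEs \<Sigma> [] [] 0"
| ECons: "evalE \<Sigma> e v c \<Longrightarrow> evalEs \<Sigma> es vs cs \<Longrightarrow> evalEs \<Sigma> (e # es) (v # vs) (c + cs)"

(* exec \<Sigma> s \<Sigma>' c :  \<Sigma> \<turnstile> s \<Down> \<Sigma>'  with instruction count c;
   execLoop x s j i \<Sigma> \<Sigma>' c : iterations j, j+1, ..., i-1 of the loop body s *)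
inductive exec :: "store \<Rightarrow> stmt \<Rightarrow> store \<Rightarrow> nat \<Rightarrow> bool"
  and execSeq :: "store \<Rightarrow> stmt list \<Rightarrow> store \<Rightarrow> nat \<Rightarrow> bool"
  and execLoop :: "vname \<Rightarrow> stmt \<Rightarrow> nat \<Rightarrow> int \<Rightarrow> store \<Rightarrow> store \<Rightarrow> nat \<Rightarrow> bool" where
  XDecl: "exec \<Sigma> (Decl t x) (\<Sigma>(x \<mapsto> default_val t)) 1"
| XAssign: "x \<in> dom \<Sigma> \<Longrightarrow> evalE \<Sigma> e v c \<Longrightarrow> exec \<Sigma> (Assign x e) (\<Sigma>(x \<mapsto> v)) (c + 1)"
| XBlock: "execSeq \<Sigma> ss \<Sigma>' c \<Longrightarrow> exec \<Sigma> (Block ss) \<Sigma>' (c + 1)"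
| XIfT: "evalE \<Sigma> e (VB True) c \<Longrightarrow> exec \<Sigma> s1 \<Sigma>' c' \<Longrightarrow> exec \<Sigma> (If e s1 s2) \<Sigma>' (c + c')"
| XIfF: "evalE \<Sigma> e (VB False) c \<Longrightarrow> exec \<Sigma> s2 \<Sigma>' c' \<Longrightarrow> exec \<Sigma> (If e s1 s2) \<Sigma>' (c + c')"
| XFor: "evalE \<Sigma> (Op OSize [e]) (VI i) c \<Longrightarrow> execLoop x s 0 i \<Sigma> \<Sigma>' c'
          \<Longrightarrow> exec \<Sigma> (For x e s) \<Sigma>' (c + c')"
| XSNil: "execSeq \<Sigma> [] \<Sigma> 0"
| XSCons: "exec \<Sigma> s \<Sigma>1 c \<Longrightarrow> execSeq \<Sigma>1 ss \<Sigma>' cs \<Longrightarrow> execSeq \<Sigma> (s # ss) \<Sigma>' (c + cs)"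
| XLStop: "\<not> (int j < i) \<Longrightarrow> execLoop x s j i \<Sigma> \<Sigma> 0"
| XLStep: "int j < i \<Longrightarrow> exec (\<Sigma>(x \<mapsto> VI (int j))) s \<Sigma>1 c1 \<Longrightarrow> execLoop x s (Suc j) i \<Sigma>1 \<Sigma>' c2
           \<Longrightarrow> execLoop x s j i \<Sigma> \<Sigma>' (c1 + c2)"

(* run p vs r c : program p on inputs vs outputs r with instruction count c = ic(p, vs) *)
definition run :: "prog \<Rightarrow> int list \<Rightarrow> int \<Rightarrow> nat \<Rightarrow> bool" where
  "run p vs r c \<longleftrightarrow> (\<exists>\<Sigma>' c1 c2. execSeq (Map.empty(params p [\<mapsto>] map VI vs)) (body p) \<Sigma>' c1
                        \<and> evalE \<Sigma>' (ret p) (VI r) c2 \<and> c = c1 + c2)"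

type_synonym tenv = "vname \<Rightarrow> ty option"

definition is_int_ty :: "ty \<Rightarrow> bool" where
  "is_int_ty t \<longleftrightarrow> t = TIInt \<or> t = TInt"

definition sup_ty :: "ty \<Rightarrow> ty \<Rightarrow> ty" where
  "sup_ty t1 t2 = (if t1 = TIInt \<and> t2 = TIInt then TIInt else TInt)"

definition int_ty :: "ty \<Rightarrow> ty option" where
  "int_ty t = (if is_int_ty t then Some t else None)"

definition iint_ty :: "ty \<Rightarrow> unit option" where
  "iint_ty t = (if t = TIInt then Some () else None)"

definition bool_ty :: "ty \<Rightarrow> unit option" where
  "bool_ty t = (if t = TBool then Some () else None)"

fun op_ty :: "oper \<Rightarrow> ty list \<Rightarrow> ty option" where
  "op_ty ONeg ts = un id int_ty ts"
| "op_ty OPlus ts = bin sup_ty int_ty ts"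
| "op_ty OMinus ts = bin sup_ty int_ty ts"
| "op_ty ODiv ts = bin sup_ty int_ty ts"
| "op_ty OMod ts = bin sup_ty int_ty ts"
| "op_ty OSize ts = un (\<lambda>_. TIInt) iint_ty ts"
| "op_ty OGe ts = bin (\<lambda>_ _. TBool) int_ty ts"
| "op_ty OLe ts = bin (\<lambda>_ _. TBool) int_ty ts"
| "op_ty OGt ts = bin (\<lambda>_ _. TBool) int_ty ts"
| "op_ty OLt ts = bin (\<lambda>_ _. TBool) int_ty ts"
| "op_ty OEq ts = bin (\<lambda>_ _. TBool) int_ty ts"
| "op_ty ONe ts = bin (\<lambda>_ _. TBool) int_ty ts"
| "op_ty ONot ts = un (\<lambda>_. TBool) bool_ty ts"
| "op_ty OAnd ts = bin (\<lambda>_ _. TBool) bool_ty ts"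
| "op_ty OOr ts = bin (\<lambda>_ _. TBool) bool_ty ts"

(* expression typing  Gamma, l |- e : t  (the loop indicator plays no role for expressions) *)
inductive tyE :: "tenv \<Rightarrow> expr \<Rightarrow> ty \<Rightarrow> bool"
  and tyEs :: "tenv \<Rightarrow> expr list \<Rightarrow> ty list \<Rightarrow> bool" where
  TVar: "\<Gamma> x = Some t \<Longrightarrow> tyE \<Gamma> (Var x) t"
| TNum: "tyE \<Gamma> (Num n) TIInt"
| TTru: "tyE \<Gamma> Tru TBool"
| TFls: "tyE \<Gamma> Fls TBool"
| TParen: "tyE \<Gamma> e t \<Longrightarrow> tyE \<Gamma> (Paren e) t"
| TOp: "tyEs \<Gamma> es ts \<Longrightarrow> op_ty f ts = Some t \<Longrightarrow> tyE \<Gamma> (Op f es) t"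
| TNil: "tyEs \<Gamma> [] []"
| TCons: "tyE \<Gamma> e t \<Longrightarrow> tyEs \<Gamma> es ts \<Longrightarrow> tyEs \<Gamma> (e # es) (t # ts)"

definition compat_ty :: "ty \<Rightarrow> ty \<Rightarrow> bool" where
  "compat_ty t1 t2 \<longleftrightarrow> (is_int_ty t1 \<and> is_int_ty t2) \<or> (t1 = TBool \<and> t2 = TBool)"

(* statement typing  \<Gamma>, lp \<turnstile> s : \<Gamma>' *)
inductive tyS :: "tenv \<Rightarrow> bool \<Rightarrow> stmt \<Rightarrow> tenv \<Rightarrow> bool"
  and tySeq :: "tenv \<Rightarrow> bool \<Rightarrow> stmt list \<Rightarrow> tenv \<Rightarrow> bool" where
  TDecl: "x \<notin> dom \<Gamma> \<Longrightarrow> \<not> (lp \<and> t = TIInt) \<Longrightarrow> tyS \<Gamma> lp (Decl t x) (\<Gamma>(x \<mapsto> t))"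
| TAssign: "\<Gamma> x = Some tx \<Longrightarrow> \<not> (lp \<and> tx = TIInt) \<Longrightarrow> tyE \<Gamma> e t \<Longrightarrow> compat_ty t tx
            \<Longrightarrow> tyS \<Gamma> lp (Assign x e) \<Gamma>"
| TBlock: "tySeq \<Gamma> lp ss \<Gamma>' \<Longrightarrow> tyS \<Gamma> lp (Block ss) \<Gamma>"
| TIf: "tyE \<Gamma> e TBool \<Longrightarrow> tyS \<Gamma> lp s1 \<Gamma>1 \<Longrightarrow> tyS \<Gamma> lp s2 \<Gamma>2 \<Longrightarrow> tyS \<Gamma> lp (If e s1 s2) \<Gamma>"
| TFor: "tyE \<Gamma> (Op OSize [e]) TIInt \<Longrightarrow> x \<notin> dom \<Gamma> \<Longrightarrow> tyS (\<Gamma>(x \<mapsto> TIInt)) True s \<Gamma>'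
         \<Longrightarrow> tyS \<Gamma> lp (For x e s) \<Gamma>"
| TSNil: "tySeq \<Gamma> lp [] \<Gamma>"
| TSCons: "tyS \<Gamma> lp s \<Gamma>1 \<Longrightarrow> tySeq \<Gamma>1 lp ss \<Gamma>' \<Longrightarrow> tySeq \<Gamma> lp (s # ss) \<Gamma>'"

definition well_typed :: "prog \<Rightarrow> bool" where
  "well_typed p \<longleftrightarrow> (\<exists>\<Gamma>' t. tySeq (Map.empty(params p [\<mapsto>] replicate (length (params p)) TInt)) False (body p) \<Gamma>'
                        \<and> tyE \<Gamma>' (ret p) t \<and> is_int_ty t)"

(* p computes the m-ary function f : \<int>^m \<rightarrow> \<int> (represented on lists of length m) *)
definition computes :: "prog \<Rightarrow> (int list \<Rightarrow> int) \<Rightarrow> bool" where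
  "computes p f \<longleftrightarrow> (\<forall>vs. length vs = length (params p) \<longrightarrow> (\<exists>c. run p vs (f vs) c))"

(* FPC as a set of pairs (arity m, function on lists of length m) *)
definition FPC :: "(nat \<times> (int list \<Rightarrow> int)) set" where
  "FPC = {(m, f). \<exists>p. well_typed p \<and> length (params p) = m \<and> computes p f}"

definition FPC_T :: "(nat \<Rightarrow> nat) \<Rightarrow> (nat \<times> (int list \<Rightarrow> int)) set" where
  "FPC_T T = {(m, f). \<exists>p. well_typed p \<and> length (params p) = m \<and> computes p f
      \<and> (\<exists>C N. \<forall>vs c. length vs = m \<longrightarrow> sz_ints vs \<ge> N \<longrightarrow> run p vs (f vs) c
                       \<longrightarrow> c \<le> C * T (sz_ints vs))}"

end

theory Submission
  imports Defs
begin

primrec ecost :: "expr \<Rightarrow> nat" where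
  "ecost (Var x) = 1" | "ecost (Num n) = 1" | "ecost Tru = 1" | "ecost Fls = 1"
| "ecost (Paren e) = ecost e + 1"
| "ecost (Op f es) = sum_list (map ecost es) + 1"

primrec kst :: "stmt \<Rightarrow> nat" where
  "kst (Decl t x) = 1"
| "kst (Assign x e) = ecost e + 2"
| "kst (Block ss) = sum_list (map kst ss) + 1"
| "kst (If e s1 s2) = ecost e + 2 + kst s1 + kst s2"
| "kst (For x e s) = ecost e + 2 + kst s"

primrec dvars :: "stmt \<Rightarrow> vname set" where
  "dvars (Decl t x) = {x}"
| "dvars (Assign x e) = {}"
| "dvars (Block ss) = \<Union> (set (map dvars ss))"
| "dvars (If e s1 s2) = dvars s1 \<union> dvars s2"
| "dvars (For x e s) = insert x (dvars s)"

definition dbl :: "vname \<Rightarrow> stmt" where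
  "dbl r = Assign r (Op OPlus [Var r, Var r])"

primrec instrS :: "vname \<Rightarrow> stmt \<Rightarrow> stmt" where
  "instrS r (Decl t x) = Decl t x"
| "instrS r (Assign x e) = Assign x e"
| "instrS r (Block ss) = Block (concat (map (\<lambda>s. [instrS r s, dbl r]) ss))"
| "instrS r (If e s1 s2) = If e (Block [instrS r s1, dbl r]) (Block [instrS r s2, dbl r])"
| "instrS r (For x e s) = For x e (Block [instrS r s, dbl r])"

definition instrSeq :: "vname \<Rightarrow> stmt list \<Rightarrow> stmt list" where
  "instrSeq r ss = concat (map (\<lambda>s. [instrS r s, dbl r]) ss)"

lemma instrSeq_simps[simp]: "instrSeq r [] = []" "instrSeq r (s # ss) = instrS r s # dbl r # instrSeq r ss"
  by (simp_all add: instrSeq_def)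

lemma instrS_Block[simp]: "instrS r (Block ss) = Block (instrSeq r ss)"
  by (simp add: instrSeq_def)

declare instrS.simps(3)[simp del]

lemma finite_dvars: "finite (dvars s)"
  by (induction s) auto

lemma cost_eval:
  "evalE \<Sigma> e v c \<Longrightarrow> c = ecost e"
  "evalEs \<Sigma> es vs c \<Longrightarrow> c = sum_list (map ecost es)"
  by (induction rule: evalE_evalEs.inducts) auto

lemma eval_mono:
  "evalE \<Sigma> e v c \<Longrightarrow> \<Sigma> \<subseteq>\<^sub>m \<Sigma>' \<Longrightarrow> evalE \<Sigma>' e v c"
  "evalEs \<Sigma> es vs c \<Longrightarrow> \<Sigma> \<subseteq>\<^sub>m \<Sigma>' \<Longrightarrow> evalEs \<Sigma>' es vs c"
proof (induction rule: evalE_evalEs.inducts)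
  case (EVar \<Sigma> x v)
  then show ?case by (metis domI evalE_evalEs.EVar map_le_def)
qed (auto intro: evalE_evalEs.intros[simplified])

lemma ty_mono:
  "tyE \<Gamma> e t \<Longrightarrow> \<Gamma> \<subseteq>\<^sub>m \<Gamma>' \<Longrightarrow> tyE \<Gamma>' e t"
  "tyEs \<Gamma> es ts \<Longrightarrow> \<Gamma> \<subseteq>\<^sub>m \<Gamma>' \<Longrightarrow> tyEs \<Gamma>' es ts"
proof (induction rule: tyE_tyEs.inducts)
  case (TVar \<Gamma> x t)
  then show ?case by (metis domI tyE_tyEs.TVar map_le_def)
qed (auto intro: tyE_tyEs.intros)

lemma map_le_upd_fresh: "r \<notin> dom m \<Longrightarrow> m \<subseteq>\<^sub>m m(r \<mapsto> v)"
  by (auto simp: map_le_def)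

lemma ty_dbl: "\<Gamma> r = Some TInt \<Longrightarrow> tyS \<Gamma> lp (dbl r) \<Gamma>"
  unfolding dbl_def
  apply (rule TAssign[where tx=TInt and t=TInt])
  apply simp apply simp
   apply (rule TOp[where ts="[TInt,TInt]"])
    apply (auto intro!: tyE_tyEs.intros simp: bin_def int_ty_def is_int_ty_def sup_ty_def compat_ty_def)
  done


lemma ty_instr:
  "tyS \<Gamma> lp s \<Gamma>' \<Longrightarrow> r \<notin> dom \<Gamma> \<Longrightarrow> r \<notin> dvars s \<Longrightarrow>
     tyS (\<Gamma>(r \<mapsto> TInt)) lp (instrS r s) (\<Gamma>'(r \<mapsto> TInt)) \<and> r \<notin> dom \<Gamma>'"
  "tySeq \<Gamma> lp ss \<Gamma>' \<Longrightarrow> r \<notin> dom \<Gamma> \<Longrightarrow> r \<notin> \<Union> (set (map dvars ss)) \<Longrightarrow>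
     tySeq (\<Gamma>(r \<mapsto> TInt)) lp (instrSeq r ss) (\<Gamma>'(r \<mapsto> TInt)) \<and> r \<notin> dom \<Gamma>'"
proof (induction rule: tyS_tySeq.inducts)
  case (TDecl x \<Gamma> lp t)
  have "tyS (\<Gamma>(r \<mapsto> TInt)) lp (Decl t x) ((\<Gamma>(r \<mapsto> TInt))(x \<mapsto> t))"
    by (rule tyS_tySeq.TDecl) (use TDecl in auto)
  moreover have "(\<Gamma>(r \<mapsto> TInt))(x \<mapsto> t) = (\<Gamma>(x \<mapsto> t))(r \<mapsto> TInt)" using TDecl by (auto simp: fun_upd_twist)
  moreover have "r \<notin> dom (\<Gamma>(x \<mapsto> t))" using TDecl by auto
  ultimately show ?case by (metis instrS.simps(1))
next
  case (TAssign \<Gamma> x tx lp e t)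
  have "x \<noteq> r" using TAssign by auto
  have "tyS (\<Gamma>(r \<mapsto> TInt)) lp (Assign x e) (\<Gamma>(r \<mapsto> TInt))"
    apply (rule tyS_tySeq.TAssign[where tx=tx and t=t])
    using TAssign \<open>x \<noteq> r\<close> by (auto intro: ty_mono(1)[OF _ map_le_upd_fresh])
  then show ?case using TAssign.prems by (metis instrS.simps(2))
next
  case (TBlock \<Gamma> lp ss \<Gamma>')
  have h: "tySeq (\<Gamma>(r \<mapsto> TInt)) lp (instrSeq r ss) (\<Gamma>'(r \<mapsto> TInt))"
    using TBlock.IH TBlock.prems(1) TBlock.prems(2)[unfolded dvars.simps] by blast
  show ?case using tyS_tySeq.TBlock[OF h] TBlock.prems(1) by (metis instrS_Block)
next
  case (TIf \<Gamma> e lp s1 \<Gamma>1 s2 \<Gamma>2)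
  have g: "tyE (\<Gamma>(r \<mapsto> TInt)) e TBool" using TIf by (auto intro: ty_mono(1)[OF _ map_le_upd_fresh])
  have i1: "tyS (\<Gamma>(r \<mapsto> TInt)) lp (instrS r s1) (\<Gamma>1(r \<mapsto> TInt))" using TIf.IH TIf.prems(1) TIf.prems(2)[unfolded dvars.simps] by blast
  have i2: "tyS (\<Gamma>(r \<mapsto> TInt)) lp (instrS r s2) (\<Gamma>2(r \<mapsto> TInt))" using TIf.IH TIf.prems(1) TIf.prems(2)[unfolded dvars.simps] by blast
  have b1: "tyS (\<Gamma>(r \<mapsto> TInt)) lp (Block [instrS r s1, dbl r]) (\<Gamma>(r \<mapsto> TInt))"
    by (rule tyS_tySeq.TBlock, rule tyS_tySeq.TSCons[OF i1], rule tyS_tySeq.TSCons[OF ty_dbl], simp, rule tyS_tySeq.TSNil)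
  have b2: "tyS (\<Gamma>(r \<mapsto> TInt)) lp (Block [instrS r s2, dbl r]) (\<Gamma>(r \<mapsto> TInt))"
    by (rule tyS_tySeq.TBlock, rule tyS_tySeq.TSCons[OF i2], rule tyS_tySeq.TSCons[OF ty_dbl], simp, rule tyS_tySeq.TSNil)
  show ?case using TIf.prems(1) tyS_tySeq.TIf[OF g b1 b2] by (metis instrS.simps(4))
next
  case (TFor \<Gamma> e x s \<Gamma>' lp)
  have xr: "x \<noteq> r" using TFor by auto
  have g: "tyE (\<Gamma>(r \<mapsto> TInt)) (Op OSize [e]) TIInt" using TFor by (auto intro: ty_mono(1)[OF _ map_le_upd_fresh])
  have ih: "tyS ((\<Gamma>(x \<mapsto> TIInt))(r \<mapsto> TInt)) True (instrS r s) (\<Gamma>'(r \<mapsto> TInt))"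
  proof -
    have "r \<notin> dom (\<Gamma>(x \<mapsto> TIInt))" using TFor.prems(1) xr by simp
    then show ?thesis using TFor.IH TFor.prems(2)[unfolded dvars.simps] by blast
  qed
  have eq: "(\<Gamma>(x \<mapsto> TIInt))(r \<mapsto> TInt) = (\<Gamma>(r \<mapsto> TInt))(x \<mapsto> TIInt)" using xr by (auto simp: fun_upd_twist)
  have b: "tyS ((\<Gamma>(r \<mapsto> TInt))(x \<mapsto> TIInt)) True (Block [instrS r s, dbl r]) ((\<Gamma>(r \<mapsto> TInt))(x \<mapsto> TIInt))"
    by (rule tyS_tySeq.TBlock, rule tyS_tySeq.TSCons[OF ih[unfolded eq]], rule tyS_tySeq.TSCons[OF ty_dbl], simp, rule tyS_tySeq.TSNil)
  have "tyS (\<Gamma>(r \<mapsto> TInt)) lp (For x e (Block [instrS r s, dbl r])) (\<Gamma>(r \<mapsto> TInt))"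
    by (rule tyS_tySeq.TFor[OF g _ b]) (use TFor xr in auto)
  then show ?case using TFor.prems(1) by (metis instrS.simps(5))
next
  case (TSNil \<Gamma> lp)
  then show ?case using tyS_tySeq.TSNil by (metis instrSeq_simps(1))
next
  case (TSCons \<Gamma> lp s \<Gamma>1 ss \<Gamma>')
  have i1: "tyS (\<Gamma>(r \<mapsto> TInt)) lp (instrS r s) (\<Gamma>1(r \<mapsto> TInt))" "r \<notin> dom \<Gamma>1" using TSCons.IH TSCons.prems(1) TSCons.prems(2)[unfolded list.map list.set Union_insert] by blast+
  have i2: "tySeq (\<Gamma>1(r \<mapsto> TInt)) lp (instrSeq r ss) (\<Gamma>'(r \<mapsto> TInt))" "r \<notin> dom \<Gamma>'" using TSCons.IH TSCons.prems(1) TSCons.prems(2)[unfolded list.map list.set Union_insert] i1(2) by blast+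
  show ?case using tyS_tySeq.TSCons[OF i1(1) tyS_tySeq.TSCons[OF ty_dbl[of "\<Gamma>1(r \<mapsto> TInt)" r] i2(1)]] i2(2) by (metis instrSeq_simps(2) fun_upd_same)
qed


lemma exec_dbl: "exec (\<Sigma>(r \<mapsto> VI b)) (dbl r) (\<Sigma>(r \<mapsto> VI (b * 2))) 4"
proof -
  have e: "evalE (\<Sigma>(r \<mapsto> VI b)) (Op OPlus [Var r, Var r]) (VI (b * 2)) 3"
  proof -
    have v: "evalE (\<Sigma>(r \<mapsto> VI b)) (Var r) (VI b) 1" by (rule EVar) simp
    have "evalEs (\<Sigma>(r \<mapsto> VI b)) [Var r, Var r] [VI b, VI b] (1 + (1 + 0))"
      by (intro ECons v ENil)
    then have "evalE (\<Sigma>(r \<mapsto> VI b)) (Op OPlus [Var r, Var r]) (VI (b * 2)) (1 + (1 + 0) + 1)"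
      by (rule EOp) (simp add: bin_def)
    then show ?thesis by (simp add: numeral_3_eq_3)
  qed
  have "exec (\<Sigma>(r \<mapsto> VI b)) (dbl r) ((\<Sigma>(r \<mapsto> VI b))(r \<mapsto> VI (b * 2))) (3 + 1)"
    unfolding dbl_def by (rule XAssign) (use e in auto)
  then show ?thesis by simp
qed

lemma exec_blk2:
  assumes "exec (\<Sigma>(r \<mapsto> VI a)) (instrS r s) (\<Sigma>'(r \<mapsto> VI (a * 2 ^ n))) c"
  shows "\<exists>c'. exec (\<Sigma>(r \<mapsto> VI a)) (Block [instrS r s, dbl r]) (\<Sigma>'(r \<mapsto> VI (a * 2 ^ Suc n))) c'"
proof -
  have "execSeq (\<Sigma>'(r \<mapsto> VI (a * 2 ^ n))) [dbl r] (\<Sigma>'(r \<mapsto> VI (a * 2 ^ n * 2))) (4 + 0)"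
    by (rule XSCons[OF exec_dbl XSNil])
  then have "execSeq (\<Sigma>(r \<mapsto> VI a)) [instrS r s, dbl r] (\<Sigma>'(r \<mapsto> VI (a * 2 ^ n * 2))) (c + (4 + 0))"
    by (intro XSCons[OF assms])
  then have "exec (\<Sigma>(r \<mapsto> VI a)) (Block [instrS r s, dbl r]) (\<Sigma>'(r \<mapsto> VI (a * 2 ^ n * 2))) (c + (4 + 0) + 1)"
    by (rule XBlock)
  moreover have "a * 2 ^ n * 2 = a * 2 ^ Suc n" by (simp add: power_Suc2 mult.assoc)
  ultimately show ?thesis by metis
qed

lemma sim:
  "exec \<Sigma> s \<Sigma>' c \<Longrightarrow> r \<notin> dom \<Sigma> \<Longrightarrow> r \<notin> dvars s \<Longrightarrow> kst s \<le> K \<Longrightarrow>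
     r \<notin> dom \<Sigma>' \<and> (\<forall>a. \<exists>n c'. exec (\<Sigma>(r \<mapsto> VI a)) (instrS r s) (\<Sigma>'(r \<mapsto> VI (a * 2 ^ n))) c' \<and> c \<le> K * (n + 1))"
  "execSeq \<Sigma> ss \<Sigma>' c \<Longrightarrow> r \<notin> dom \<Sigma> \<Longrightarrow> r \<notin> \<Union> (set (map dvars ss)) \<Longrightarrow> sum_list (map kst ss) \<le> K \<Longrightarrow>
     r \<notin> dom \<Sigma>' \<and> (\<forall>a. \<exists>n c'. execSeq (\<Sigma>(r \<mapsto> VI a)) (instrSeq r ss) (\<Sigma>'(r \<mapsto> VI (a * 2 ^ n))) c' \<and> c \<le> K * n)"
  "execLoop x s j i \<Sigma> \<Sigma>' c \<Longrightarrow> r \<notin> dom \<Sigma> \<Longrightarrow> r \<noteq> x \<Longrightarrow> r \<notin> dvars s \<Longrightarrow> kst s \<le> K \<Longrightarrow>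
     r \<notin> dom \<Sigma>' \<and> (\<forall>a. \<exists>n c'. execLoop x (Block [instrS r s, dbl r]) j i (\<Sigma>(r \<mapsto> VI a)) (\<Sigma>'(r \<mapsto> VI (a * 2 ^ n))) c' \<and> c \<le> K * n)"
proof (induction rule: exec_execSeq_execLoop.inducts)
  case (XDecl \<Sigma> t x)
  have xr: "x \<noteq> r" using XDecl by simp
  show ?case
  proof (intro conjI allI)
    show "r \<notin> dom (\<Sigma>(x \<mapsto> default_val t))" using XDecl xr by simp
    fix a
    have "exec (\<Sigma>(r \<mapsto> VI a)) (Decl t x) ((\<Sigma>(r \<mapsto> VI a))(x \<mapsto> default_val t)) 1" by (rule exec_execSeq_execLoop.XDecl)
    moreover have "(\<Sigma>(r \<mapsto> VI a))(x \<mapsto> default_val t) = (\<Sigma>(x \<mapsto> default_val t))(r \<mapsto> VI (a * 2 ^ 0))"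
      using xr by (auto simp: fun_upd_twist)
    ultimately show "\<exists>n c'. exec (\<Sigma>(r \<mapsto> VI a)) (instrS r (Decl t x)) ((\<Sigma>(x \<mapsto> default_val t))(r \<mapsto> VI (a * 2 ^ n))) c' \<and> 1 \<le> K * (n + 1)"
      using XDecl.prems by (metis instrS.simps(1) kst.simps(1) mult.right_neutral add_0)
  qed
next
  case (XAssign x \<Sigma> e v c)
  have xr: "x \<noteq> r" using XAssign by auto
  show ?case
  proof (intro conjI allI)
    show "r \<notin> dom (\<Sigma>(x \<mapsto> v))" using XAssign xr by simp
    fix a
    have ev: "evalE (\<Sigma>(r \<mapsto> VI a)) e v c" using eval_mono(1)[OF XAssign(2) map_le_upd_fresh[OF XAssign.prems(1)]] .
    have "exec (\<Sigma>(r \<mapsto> VI a)) (Assign x e) ((\<Sigma>(r \<mapsto> VI a))(x \<mapsto> v)) (c + 1)"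
      by (rule exec_execSeq_execLoop.XAssign) (use XAssign ev in auto)
    moreover have "(\<Sigma>(r \<mapsto> VI a))(x \<mapsto> v) = (\<Sigma>(x \<mapsto> v))(r \<mapsto> VI (a * 2 ^ 0))"
      using xr by (auto simp: fun_upd_twist)
    moreover have "c + 1 \<le> K" using XAssign.prems cost_eval(1)[OF XAssign(2)] by simp
    ultimately show "\<exists>n c'. exec (\<Sigma>(r \<mapsto> VI a)) (instrS r (Assign x e)) ((\<Sigma>(x \<mapsto> v))(r \<mapsto> VI (a * 2 ^ n))) c' \<and> c + 1 \<le> K * (n + 1)"
      by (metis instrS.simps(2) mult.right_neutral add_0)
  qed
next
  case (XBlock \<Sigma> ss \<Sigma>' c)
  have ih: "r \<notin> dom \<Sigma>' \<and> (\<forall>a. \<exists>n c'. execSeq (\<Sigma>(r \<mapsto> VI a)) (instrSeq r ss) (\<Sigma>'(r \<mapsto> VI (a * 2 ^ n))) c' \<and> c \<le> K * n)"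
  proof -
    have "sum_list (map kst ss) \<le> K" using XBlock.prems(3) by simp
    then show ?thesis using XBlock.IH XBlock.prems(1) XBlock.prems(2)[unfolded dvars.simps] by blast
  qed
  show ?case
  proof (intro conjI allI)
    show "r \<notin> dom \<Sigma>'" using ih by simp
    fix a
    obtain n c' where e: "execSeq (\<Sigma>(r \<mapsto> VI a)) (instrSeq r ss) (\<Sigma>'(r \<mapsto> VI (a * 2 ^ n))) c'" and cb: "c \<le> K * n"
      using ih by blast
    have "exec (\<Sigma>(r \<mapsto> VI a)) (Block (instrSeq r ss)) (\<Sigma>'(r \<mapsto> VI (a * 2 ^ n))) (c' + 1)"
      by (rule exec_execSeq_execLoop.XBlock[OF e])
    moreover have "1 \<le> K" using XBlock.prems(3) by simp
    then have "c + 1 \<le> K * (n + 1)" using cb by (simp add: algebra_simps)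
    ultimately show "\<exists>n c'. exec (\<Sigma>(r \<mapsto> VI a)) (instrS r (Block ss)) (\<Sigma>'(r \<mapsto> VI (a * 2 ^ n))) c' \<and> c + 1 \<le> K * (n + 1)"
      unfolding instrS_Block by blast
  qed
next
  case (XIfT \<Sigma> e c s1 \<Sigma>' c' s2)
  have ih: "r \<notin> dom \<Sigma>' \<and> (\<forall>a. \<exists>n c''. exec (\<Sigma>(r \<mapsto> VI a)) (instrS r s1) (\<Sigma>'(r \<mapsto> VI (a * 2 ^ n))) c'' \<and> c' \<le> K * (n + 1))"
  proof -
    have "kst s1 \<le> K" using XIfT.prems(3) by simp
    then show ?thesis using XIfT.IH XIfT.prems(1) XIfT.prems(2)[unfolded dvars.simps] by blast
  qed
  show ?case
  proof (intro conjI allI)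
    show "r \<notin> dom \<Sigma>'" using ih by simp
    fix a
    obtain n c'' where ex: "exec (\<Sigma>(r \<mapsto> VI a)) (instrS r s1) (\<Sigma>'(r \<mapsto> VI (a * 2 ^ n))) c''" "c' \<le> K * (n + 1)"
      using ih by blast
    obtain c3 where b: "exec (\<Sigma>(r \<mapsto> VI a)) (Block [instrS r s1, dbl r]) (\<Sigma>'(r \<mapsto> VI (a * 2 ^ Suc n))) c3"
      using exec_blk2[OF ex(1)] by blast
    have ev: "evalE (\<Sigma>(r \<mapsto> VI a)) e (VB True) c" using eval_mono(1)[OF XIfT(1) map_le_upd_fresh[OF XIfT.prems(1)]] .
    have "c \<le> K" using XIfT.prems cost_eval(1)[OF XIfT(1)] by simp
    then show "\<exists>n c''. exec (\<Sigma>(r \<mapsto> VI a)) (instrS r (stmt.If e s1 s2)) (\<Sigma>'(r \<mapsto> VI (a * 2 ^ n))) c'' \<and> c + c' \<le> K * (n + 1)"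
    proof -
      assume cK: "c \<le> K"
      have X: "exec (\<Sigma>(r \<mapsto> VI a)) (instrS r (stmt.If e s1 s2)) (\<Sigma>'(r \<mapsto> VI (a * 2 ^ Suc n))) (c + c3)"
        unfolding instrS.simps by (rule exec_execSeq_execLoop.XIfT[OF ev b])
      have "c + c' \<le> K * (Suc n + 1)" using cK ex(2) by (simp add: algebra_simps)
      then show ?thesis using X by blast
    qed
  qed
next
  case (XIfF \<Sigma> e c s2 \<Sigma>' c' s1)
  have ih: "r \<notin> dom \<Sigma>' \<and> (\<forall>a. \<exists>n c''. exec (\<Sigma>(r \<mapsto> VI a)) (instrS r s2) (\<Sigma>'(r \<mapsto> VI (a * 2 ^ n))) c'' \<and> c' \<le> K * (n + 1))"
  proof -
    have "kst s2 \<le> K" using XIfF.prems(3) by simp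
    then show ?thesis using XIfF.IH XIfF.prems(1) XIfF.prems(2)[unfolded dvars.simps] by blast
  qed
  show ?case
  proof (intro conjI allI)
    show "r \<notin> dom \<Sigma>'" using ih by simp
    fix a
    obtain n c'' where ex: "exec (\<Sigma>(r \<mapsto> VI a)) (instrS r s2) (\<Sigma>'(r \<mapsto> VI (a * 2 ^ n))) c''" "c' \<le> K * (n + 1)"
      using ih by blast
    obtain c3 where b: "exec (\<Sigma>(r \<mapsto> VI a)) (Block [instrS r s2, dbl r]) (\<Sigma>'(r \<mapsto> VI (a * 2 ^ Suc n))) c3"
      using exec_blk2[OF ex(1)] by blast
    have ev: "evalE (\<Sigma>(r \<mapsto> VI a)) e (VB False) c" using eval_mono(1)[OF XIfF(1) map_le_upd_fresh[OF XIfF.prems(1)]] .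
    have "c \<le> K" using XIfF.prems cost_eval(1)[OF XIfF(1)] by simp
    then show "\<exists>n c''. exec (\<Sigma>(r \<mapsto> VI a)) (instrS r (stmt.If e s1 s2)) (\<Sigma>'(r \<mapsto> VI (a * 2 ^ n))) c'' \<and> c + c' \<le> K * (n + 1)"
    proof -
      assume cK: "c \<le> K"
      have X: "exec (\<Sigma>(r \<mapsto> VI a)) (instrS r (stmt.If e s1 s2)) (\<Sigma>'(r \<mapsto> VI (a * 2 ^ Suc n))) (c + c3)"
        unfolding instrS.simps by (rule exec_execSeq_execLoop.XIfF[OF ev b])
      have "c + c' \<le> K * (Suc n + 1)" using cK ex(2) by (simp add: algebra_simps)
      then show ?thesis using X by blast
    qed
  qed
next
  case (XFor \<Sigma> e i c x s \<Sigma>' c')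
  have ih: "r \<notin> dom \<Sigma>' \<and> (\<forall>a. \<exists>n c''. execLoop x (Block [instrS r s, dbl r]) 0 i (\<Sigma>(r \<mapsto> VI a)) (\<Sigma>'(r \<mapsto> VI (a * 2 ^ n))) c'' \<and> c' \<le> K * n)"
  proof -
    have "kst s \<le> K" using XFor.prems(3) by simp
    moreover have "r \<noteq> x" using XFor.prems(2) by simp
    moreover have "r \<notin> dvars s" using XFor.prems(2) by simp
    ultimately show ?thesis using XFor.IH XFor.prems(1) by blast
  qed
  show ?case
  proof (intro conjI allI)
    show "r \<notin> dom \<Sigma>'" using ih by simp
    fix a
    obtain n c'' where ex: "execLoop x (Block [instrS r s, dbl r]) 0 i (\<Sigma>(r \<mapsto> VI a)) (\<Sigma>'(r \<mapsto> VI (a * 2 ^ n))) c''" "c' \<le> K * n"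
      using ih by blast
    have ev: "evalE (\<Sigma>(r \<mapsto> VI a)) (Op OSize [e]) (VI i) c" using eval_mono(1)[OF XFor(1) map_le_upd_fresh[OF XFor.prems(1)]] .
    have "c \<le> K" using XFor.prems cost_eval(1)[OF XFor(1)] by simp
    then show "\<exists>n c''. exec (\<Sigma>(r \<mapsto> VI a)) (instrS r (For x e s)) (\<Sigma>'(r \<mapsto> VI (a * 2 ^ n))) c'' \<and> c + c' \<le> K * (n + 1)"
    proof -
      assume cK: "c \<le> K"
      have X: "exec (\<Sigma>(r \<mapsto> VI a)) (instrS r (For x e s)) (\<Sigma>'(r \<mapsto> VI (a * 2 ^ n))) (c + c'')"
        unfolding instrS.simps by (rule exec_execSeq_execLoop.XFor[OF ev ex(1)])
      have "c + c' \<le> K * (n + 1)" using cK ex(2) by (simp add: algebra_simps)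
      then show ?thesis using X by blast
    qed
  qed
next
  case (XSNil \<Sigma>)
  show ?case
  proof (intro conjI allI)
    show "r \<notin> dom \<Sigma>" using XSNil by simp
    fix a
    have "execSeq (\<Sigma>(r \<mapsto> VI a)) [] (\<Sigma>(r \<mapsto> VI (a * 2^0))) 0"
      by (simp only: power_0 mult_1_right) (rule exec_execSeq_execLoop.XSNil)
    then show "\<exists>n c'. execSeq (\<Sigma>(r \<mapsto> VI a)) (instrSeq r []) (\<Sigma>(r \<mapsto> VI (a * 2 ^ n))) c' \<and> 0 \<le> K * n"
      by (metis instrSeq_simps(1) le0)
  qed
next
  case (XSCons \<Sigma> s \<Sigma>1 c ss \<Sigma>' cs)
  have ih1: "r \<notin> dom \<Sigma>1 \<and> (\<forall>a. \<exists>n c'. exec (\<Sigma>(r \<mapsto> VI a)) (instrS r s) (\<Sigma>1(r \<mapsto> VI (a * 2 ^ n))) c' \<and> c \<le> K * (n + 1))"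
  proof -
    have "kst s \<le> K" using XSCons.prems(3) by simp
    moreover have "r \<notin> dvars s" using XSCons.prems(2) by simp
    ultimately show ?thesis using XSCons.IH(1) XSCons.prems(1) by blast
  qed
  have ih2: "r \<notin> dom \<Sigma>' \<and> (\<forall>a. \<exists>n c'. execSeq (\<Sigma>1(r \<mapsto> VI a)) (instrSeq r ss) (\<Sigma>'(r \<mapsto> VI (a * 2 ^ n))) c' \<and> cs \<le> K * n)"
  proof -
    have "sum_list (map kst ss) \<le> K" using XSCons.prems(3) by simp
    moreover have "r \<notin> \<Union> (set (map dvars ss))" using XSCons.prems(2) by simp
    moreover have "r \<notin> dom \<Sigma>1" using ih1 by blast
    ultimately show ?thesis using XSCons.IH(2) by blast
  qed
  show ?case
  proof (intro conjI allI)
    show "r \<notin> dom \<Sigma>'" using ih2 by simp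
    fix a
    obtain n1 c1 where e1: "exec (\<Sigma>(r \<mapsto> VI a)) (instrS r s) (\<Sigma>1(r \<mapsto> VI (a * 2 ^ n1))) c1" "c \<le> K * (n1 + 1)"
      using ih1 by blast
    obtain n2 c2 where e2: "execSeq (\<Sigma>1(r \<mapsto> VI (a * 2 ^ n1 * 2))) (instrSeq r ss) (\<Sigma>'(r \<mapsto> VI (a * 2 ^ n1 * 2 * 2 ^ n2))) c2" "cs \<le> K * n2"
      using ih2 by blast
    have "execSeq (\<Sigma>(r \<mapsto> VI a)) (instrS r s # dbl r # instrSeq r ss) (\<Sigma>'(r \<mapsto> VI (a * 2 ^ n1 * 2 * 2 ^ n2))) (c1 + (4 + c2))"
      by (rule exec_execSeq_execLoop.XSCons[OF e1(1) exec_execSeq_execLoop.XSCons[OF exec_dbl e2(1)]])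
    moreover have "a * 2 ^ n1 * 2 * 2 ^ n2 = a * 2 ^ (n1 + 1 + n2)" by (simp add: power_add)
    moreover have "c + cs \<le> K * (n1 + 1 + n2)" using e1(2) e2(2) by (simp add: algebra_simps)
    ultimately show "\<exists>n c'. execSeq (\<Sigma>(r \<mapsto> VI a)) (instrSeq r (s # ss)) (\<Sigma>'(r \<mapsto> VI (a * 2 ^ n))) c' \<and> c + cs \<le> K * n"
      unfolding instrSeq_simps by metis
  qed
next
  case (XLStop j i x s \<Sigma>)
  show ?case
  proof (intro conjI allI)
    show "r \<notin> dom \<Sigma>" using XLStop by simp
    fix a
    have "execLoop x (Block [instrS r s, dbl r]) j i (\<Sigma>(r \<mapsto> VI a)) (\<Sigma>(r \<mapsto> VI (a * 2^0))) 0"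
      by (simp only: power_0 mult_1_right) (rule exec_execSeq_execLoop.XLStop[OF XLStop(1)])
    then show "\<exists>n c'. execLoop x (Block [instrS r s, dbl r]) j i (\<Sigma>(r \<mapsto> VI a)) (\<Sigma>(r \<mapsto> VI (a * 2 ^ n))) c' \<and> 0 \<le> K * n"
      by (metis le0)
  qed
next
  case (XLStep j i \<Sigma> x s \<Sigma>1 c1 \<Sigma>' c2)
  have r1: "r \<notin> dom (\<Sigma>(x \<mapsto> VI (int j)))" using XLStep.prems by simp
  have ih1: "r \<notin> dom \<Sigma>1 \<and> (\<forall>a. \<exists>n c'. exec ((\<Sigma>(x \<mapsto> VI (int j)))(r \<mapsto> VI a)) (instrS r s) (\<Sigma>1(r \<mapsto> VI (a * 2 ^ n))) c' \<and> c1 \<le> K * (n + 1))"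
    using XLStep.IH(1) r1 XLStep.prems by blast
  have ih2: "r \<notin> dom \<Sigma>' \<and> (\<forall>a. \<exists>n c'. execLoop x (Block [instrS r s, dbl r]) (Suc j) i (\<Sigma>1(r \<mapsto> VI a)) (\<Sigma>'(r \<mapsto> VI (a * 2 ^ n))) c' \<and> c2 \<le> K * n)"
    using XLStep.IH(2) ih1 XLStep.prems by blast
  show ?case
  proof (intro conjI allI)
    show "r \<notin> dom \<Sigma>'" using ih2 by simp
    fix a
    obtain n1 c1' where e1: "exec ((\<Sigma>(x \<mapsto> VI (int j)))(r \<mapsto> VI a)) (instrS r s) (\<Sigma>1(r \<mapsto> VI (a * 2 ^ n1))) c1'" "c1 \<le> K * (n1 + 1)"
      using ih1 by blast
    obtain c3 where b: "exec ((\<Sigma>(x \<mapsto> VI (int j)))(r \<mapsto> VI a)) (Block [instrS r s, dbl r]) (\<Sigma>1(r \<mapsto> VI (a * 2 ^ Suc n1))) c3"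
      using exec_blk2[OF e1(1)] by blast
    have tw: "(\<Sigma>(x \<mapsto> VI (int j)))(r \<mapsto> VI a) = (\<Sigma>(r \<mapsto> VI a))(x \<mapsto> VI (int j))"
      using XLStep.prems by (auto simp: fun_upd_twist)
    obtain n2 c2' where e2: "execLoop x (Block [instrS r s, dbl r]) (Suc j) i (\<Sigma>1(r \<mapsto> VI (a * 2 ^ Suc n1))) (\<Sigma>'(r \<mapsto> VI (a * 2 ^ Suc n1 * 2 ^ n2))) c2'" "c2 \<le> K * n2"
      using ih2 by blast
    have "execLoop x (Block [instrS r s, dbl r]) j i (\<Sigma>(r \<mapsto> VI a)) (\<Sigma>'(r \<mapsto> VI (a * 2 ^ Suc n1 * 2 ^ n2))) (c3 + c2')"
      by (rule exec_execSeq_execLoop.XLStep[OF XLStep(1) b[unfolded tw] e2(1)])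
    moreover have "a * 2 ^ Suc n1 * 2 ^ n2 = a * 2 ^ (Suc n1 + n2)" by (simp add: power_add)
    moreover have "c1 + c2 \<le> K * (Suc n1 + n2)" using e1(2) e2(2) by (simp add: algebra_simps)
    ultimately show "\<exists>n c'. execLoop x (Block [instrS r s, dbl r]) j i (\<Sigma>(r \<mapsto> VI a)) (\<Sigma>'(r \<mapsto> VI (a * 2 ^ n))) c' \<and> c1 + c2 \<le> K * n"
      by metis
  qed
qed


inductive_cases EVarE: "evalE \<Sigma> (Var x) v c"
inductive_cases ENumE: "evalE \<Sigma> (Num n) v c"
inductive_cases ETruE: "evalE \<Sigma> Tru v c"
inductive_cases EFlsE: "evalE \<Sigma> Fls v c"
inductive_cases EParenE: "evalE \<Sigma> (Paren e) v c"
inductive_cases EOpE: "evalE \<Sigma> (Op f es) v c"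
inductive_cases ENilE: "evalEs \<Sigma> [] vs c"
inductive_cases EConsE: "evalEs \<Sigma> (e # es) vs c"

lemma eval_det:
  "evalE \<Sigma> e v c \<Longrightarrow> evalE \<Sigma> e v' c' \<Longrightarrow> v' = v"
  "evalEs \<Sigma> es vs c \<Longrightarrow> evalEs \<Sigma> es vs' c' \<Longrightarrow> vs' = vs"
proof (induction arbitrary: v' c' and vs' c' rule: evalE_evalEs.inducts)
  case (EVar \<Sigma> x v) then show ?case by (auto elim: EVarE)
next
  case (ENum \<Sigma> n) then show ?case by (auto elim: ENumE)
next
  case (ETru \<Sigma>) then show ?case by (auto elim: ETruE)
next
  case (EFls \<Sigma>) then show ?case by (auto elim: EFlsE)
next
  case (EParen \<Sigma> e v c)
  from EParen.prems obtain c2 where "evalE \<Sigma> e v' c2" by (auto elim: EParenE)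
  then show ?case using EParen.IH by simp
next
  case (EOp \<Sigma> es vs c f v)
  from EOp.prems obtain vs2 c2 where "evalEs \<Sigma> es vs2 c2" "op_sem f vs2 = Some v'" by (auto elim: EOpE)
  then show ?case using EOp.IH EOp.hyps(2) by simp
next
  case (ENil \<Sigma>) then show ?case by (auto elim: ENilE)
next
  case (ECons \<Sigma> e v c es vs cs)
  from ECons.prems obtain v2 c2 vs2 cs2 where "vs' = v2 # vs2" "evalE \<Sigma> e v2 c2" "evalEs \<Sigma> es vs2 cs2"
    by (auto elim: EConsE)
  then show ?case using ECons.IH by simp
qed

inductive_cases XDeclE: "exec \<Sigma> (Decl t x) \<Sigma>' c"
inductive_cases XAssignE: "exec \<Sigma> (Assign x e) \<Sigma>' c"
inductive_cases XBlockE: "exec \<Sigma> (Block ss) \<Sigma>' c"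
inductive_cases XIfE: "exec \<Sigma> (If e s1 s2) \<Sigma>' c"
inductive_cases XForE: "exec \<Sigma> (For x e s) \<Sigma>' c"
inductive_cases XSNilE: "execSeq \<Sigma> [] \<Sigma>' c"
inductive_cases XSConsE: "execSeq \<Sigma> (s # ss) \<Sigma>' c"
inductive_cases XLoopE: "execLoop x s j i \<Sigma> \<Sigma>' c"

lemma exec_det:
  "exec \<Sigma> s \<Sigma>' c \<Longrightarrow> exec \<Sigma> s \<Sigma>2 c2 \<Longrightarrow> \<Sigma>2 = \<Sigma>'"
  "execSeq \<Sigma> ss \<Sigma>' c \<Longrightarrow> execSeq \<Sigma> ss \<Sigma>2 c2 \<Longrightarrow> \<Sigma>2 = \<Sigma>'"
  "execLoop x s j i \<Sigma> \<Sigma>' c \<Longrightarrow> execLoop x s j i \<Sigma> \<Sigma>2 c2 \<Longrightarrow> \<Sigma>2 = \<Sigma>'"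
proof (induction arbitrary: \<Sigma>2 c2 and \<Sigma>2 c2 and \<Sigma>2 c2 rule: exec_execSeq_execLoop.inducts)
  case (XDecl \<Sigma> t x) then show ?case by (auto elim: XDeclE)
next
  case (XAssign x \<Sigma> e v c)
  from XAssign.prems obtain v2 c3 where "\<Sigma>2 = \<Sigma>(x \<mapsto> v2)" "evalE \<Sigma> e v2 c3" by (auto elim: XAssignE)
  then show ?case using eval_det(1)[OF XAssign.hyps(2)] by simp
next
  case (XBlock \<Sigma> ss \<Sigma>' c)
  from XBlock.prems obtain c3 where "execSeq \<Sigma> ss \<Sigma>2 c3" by (auto elim: XBlockE)
  then show ?case using XBlock.IH by simp
next
  case (XIfT \<Sigma> e c s1 \<Sigma>' c' s2)
  have "(\<exists>c3 c4. evalE \<Sigma> e (VB True) c3 \<and> exec \<Sigma> s1 \<Sigma>2 c4) \<or> (\<exists>c3 c4. evalE \<Sigma> e (VB False) c3 \<and> exec \<Sigma> s2 \<Sigma>2 c4)"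
    using XIfT.prems by (auto elim: XIfE)
  then show ?case
  proof
    assume "\<exists>c3 c4. evalE \<Sigma> e (VB True) c3 \<and> exec \<Sigma> s1 \<Sigma>2 c4"
    then obtain c3 c4 where "exec \<Sigma> s1 \<Sigma>2 c4" by blast
    then show ?thesis using XIfT.IH by simp
  next
    assume "\<exists>c3 c4. evalE \<Sigma> e (VB False) c3 \<and> exec \<Sigma> s2 \<Sigma>2 c4"
    then obtain c3 where "evalE \<Sigma> e (VB False) c3" by blast
    then have "VB False = VB True" by (rule eval_det(1)[OF XIfT.hyps(1)])
    then show ?thesis by simp
  qed
next
  case (XIfF \<Sigma> e c s2 \<Sigma>' c' s1)
  have "(\<exists>c3 c4. evalE \<Sigma> e (VB True) c3 \<and> exec \<Sigma> s1 \<Sigma>2 c4) \<or> (\<exists>c3 c4. evalE \<Sigma> e (VB False) c3 \<and> exec \<Sigma> s2 \<Sigma>2 c4)"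
    using XIfF.prems by (auto elim: XIfE)
  then show ?case
  proof
    assume "\<exists>c3 c4. evalE \<Sigma> e (VB True) c3 \<and> exec \<Sigma> s1 \<Sigma>2 c4"
    then obtain c3 where "evalE \<Sigma> e (VB True) c3" by blast
    then have "VB True = VB False" by (rule eval_det(1)[OF XIfF.hyps(1)])
    then show ?thesis by simp
  next
    assume "\<exists>c3 c4. evalE \<Sigma> e (VB False) c3 \<and> exec \<Sigma> s2 \<Sigma>2 c4"
    then obtain c3 c4 where "exec \<Sigma> s2 \<Sigma>2 c4" by blast
    then show ?thesis using XIfF.IH by simp
  qed
next
  case (XFor \<Sigma> e i c x s \<Sigma>' c')
  from XFor.prems obtain i2 c3 c4 where "evalE \<Sigma> (Op OSize [e]) (VI i2) c3" "execLoop x s 0 i2 \<Sigma> \<Sigma>2 c4"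
    by (auto elim: XForE)
  moreover from this(1) have "VI i2 = VI i" by (rule eval_det(1)[OF XFor.hyps(1)])
  ultimately show ?case using XFor.IH by simp
next
  case (XSNil \<Sigma>) then show ?case by (auto elim: XSNilE)
next
  case (XSCons \<Sigma> s \<Sigma>1 c ss \<Sigma>' cs)
  from XSCons.prems obtain \<Sigma>3 c3 cs3 where "exec \<Sigma> s \<Sigma>3 c3" "execSeq \<Sigma>3 ss \<Sigma>2 cs3"
    by (auto elim: XSConsE)
  then show ?case using XSCons.IH by simp
next
  case (XLStop j i x s \<Sigma>)
  have "(\<not> int j < i \<and> \<Sigma>2 = \<Sigma>) \<or> (int j < i)" using XLStop.prems by (auto elim: XLoopE)
  then show ?case using XLStop.hyps by simp
next
  case (XLStep j i \<Sigma> x s \<Sigma>1 c1 \<Sigma>' c2')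
  have "(\<not> int j < i) \<or> (\<exists>\<Sigma>3 c3 c4. exec (\<Sigma>(x \<mapsto> VI (int j))) s \<Sigma>3 c3 \<and> execLoop x s (Suc j) i \<Sigma>3 \<Sigma>2 c4)"
    using XLStep.prems by (rule XLoopE) blast+
  then obtain \<Sigma>3 c3 c4 where "exec (\<Sigma>(x \<mapsto> VI (int j))) s \<Sigma>3 c3" "execLoop x s (Suc j) i \<Sigma>3 \<Sigma>2 c4"
    using XLStep.hyps(1) by blast
  moreover from this(1) have "\<Sigma>3 = \<Sigma>1" by (rule XLStep.IH(1))
  ultimately show ?case using XLStep.IH(2) by blast
qed


lemma sz_pow: "n \<le> sz_int (2 ^ n)"
proof -
  have "real n = log 2 (2 ^ n)" by (simp add: log_nat_power)
  also have "\<dots> \<le> log 2 (2 ^ n + 1)" by (rule log_mono) auto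
  also have "\<dots> = log 2 (real_of_int (\<bar>(2::int) ^ n\<bar> + 1))" by simp
  also have "\<dots> \<le> real_of_int \<lceil>log 2 (real_of_int (\<bar>(2::int) ^ n\<bar> + 1))\<rceil>" by (rule le_of_int_ceiling)
  finally have "int n \<le> \<lceil>log 2 (real_of_int (\<bar>(2::int) ^ n\<bar> + 1))\<rceil>" by linarith
  then show ?thesis unfolding sz_int_def by linarith
qed

definition instrP :: "vname \<Rightarrow> prog \<Rightarrow> prog" where
  "instrP r p = \<lparr>params = params p, body = Decl TInt r # Assign r (Num 1) # instrSeq r (body p), ret = Var r\<rparr>"

lemma instrP_wt:
  assumes "well_typed p" "r \<notin> set (params p)" "r \<notin> \<Union> (set (map dvars (body p)))"
  shows "well_typed (instrP r p)"
proof -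
  let ?G0 = "Map.empty(params p [\<mapsto>] replicate (length (params p)) TInt)"
  obtain G' t where wt: "tySeq ?G0 False (body p) G'" "tyE G' (ret p) t" "is_int_ty t"
    using assms(1) unfolding well_typed_def by blast
  have r0: "r \<notin> dom ?G0" using assms(2) by (auto dest: in_set_takeD)
  have i: "tySeq (?G0(r \<mapsto> TInt)) False (instrSeq r (body p)) (G'(r \<mapsto> TInt))"
    using ty_instr(2)[OF wt(1) r0 assms(3)] by blast
  have d: "tyS ?G0 False (Decl TInt r) (?G0(r \<mapsto> TInt))" by (rule TDecl) (use r0 in auto)
  have a: "tyS (?G0(r \<mapsto> TInt)) False (Assign r (Num 1)) (?G0(r \<mapsto> TInt))"
    by (rule TAssign[where tx=TInt and t=TIInt]) (auto intro: TNum simp: compat_ty_def is_int_ty_def)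
  have "tySeq ?G0 False (body (instrP r p)) (G'(r \<mapsto> TInt))"
    unfolding instrP_def using TSCons[OF d TSCons[OF a i]] by simp
  moreover have "tyE (G'(r \<mapsto> TInt)) (ret (instrP r p)) TInt" unfolding instrP_def by (auto intro: TVar)
  ultimately show ?thesis unfolding well_typed_def instrP_def by (auto simp: is_int_ty_def)
qed

lemma instrP_run:
  assumes "run p vs y c" "length vs = length (params p)" "r \<notin> set (params p)" "r \<notin> \<Union> (set (map dvars (body p)))"
  shows "\<exists>n c'. run (instrP r p) vs (2 ^ n) c' \<and> c \<le> sum_list (map kst (body p)) * n + ecost (ret p)"
proof -
  let ?S0 = "Map.empty(params p [\<mapsto>] map VI vs)"
  let ?K = "sum_list (map kst (body p))"
  obtain S' c1 c2 where rn: "execSeq ?S0 (body p) S' c1" "evalE S' (ret p) (VI y) c2" "c = c1 + c2"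
    using assms(1) unfolding run_def by blast
  have r0: "r \<notin> dom ?S0" using assms(3) by (auto dest: in_set_takeD)
  have sm: "\<forall>a. \<exists>n c'. execSeq (?S0(r \<mapsto> VI a)) (instrSeq r (body p)) (S'(r \<mapsto> VI (a * 2 ^ n))) c' \<and> c1 \<le> ?K * n"
    using sim(2)[OF rn(1) r0 assms(4)] by blast
  then obtain n c' where e: "execSeq (?S0(r \<mapsto> VI 1)) (instrSeq r (body p)) (S'(r \<mapsto> VI (1 * 2 ^ n))) c'" "c1 \<le> ?K * n"
    by blast
  have d: "exec ?S0 (Decl TInt r) (?S0(r \<mapsto> VI 0)) 1"
    using XDecl[of ?S0 TInt r] by simp
  have ev1: "evalE (?S0(r \<mapsto> VI 0)) (Num 1) (VI 1) 1" using ENum[of _ 1] by simp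
  have a: "exec (?S0(r \<mapsto> VI 0)) (Assign r (Num 1)) (?S0(r \<mapsto> VI 1)) (1 + 1)"
    using XAssign[OF _ ev1, of r] by simp
  have "execSeq ?S0 (body (instrP r p)) (S'(r \<mapsto> VI (2 ^ n))) (1 + ((1 + 1) + c'))"
    unfolding instrP_def using XSCons[OF d XSCons[OF a e(1)]] by simp
  moreover have "evalE (S'(r \<mapsto> VI (2 ^ n))) (ret (instrP r p)) (VI (2 ^ n)) 1"
    unfolding instrP_def prog.select_convs by (rule EVar) simp
  ultimately have "run (instrP r p) vs (2 ^ n) (1 + ((1 + 1) + c') + 1)"
    unfolding run_def by (simp only: instrP_def prog.select_convs) blast
  moreover have "c \<le> ?K * n + ecost (ret p)" using rn(3) e(2) cost_eval(1)[OF rn(2)] by simp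
  ultimately show ?thesis by blast
qed

lemma run_det: "run p vs y1 c1 \<Longrightarrow> run p vs y2 c2 \<Longrightarrow> y1 = y2"
  unfolding run_def
  by (metis exec_det(2) eval_det(1) val.inject(1))


theorem corollary1:
  fixes T :: "nat \<Rightarrow> nat"
  assumes "\<forall>n. T n \<ge> n"
    and "\<forall>(m, f) \<in> FPC. \<exists>C N. \<forall>vs. length vs = m \<longrightarrow> sz_ints vs \<ge> N
                              \<longrightarrow> sz_int (f vs) \<le> C * T (sz_ints vs)"
  shows "FPC = FPC_T T"
proof
  show "FPC_T T \<subseteq> FPC" unfolding FPC_T_def FPC_def by blast
next
  show "FPC \<subseteq> FPC_T T"
  proof
    fix mf assume "mf \<in> FPC"
    then obtain m f p where mf: "mf = (m, f)" and wt: "well_typed p" and len: "length (params p) = m"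
      and cp: "computes p f"
      unfolding FPC_def by blast
    have "finite (set (params p) \<union> \<Union> (set (map dvars (body p))))" by (simp add: finite_dvars)
    then obtain r where "r \<notin> set (params p) \<union> \<Union> (set (map dvars (body p)))"
      using ex_new_if_finite[OF infinite_UNIV_listI] by blast
    then have r1: "r \<notin> set (params p)" and r2: "r \<notin> \<Union> (set (map dvars (body p)))" by auto
    define p' where "p' = instrP r p"
    define g where "g = (\<lambda>vs. THE y. \<exists>c. run p' vs y c)"
    let ?K = "sum_list (map kst (body p))"
    let ?R = "ecost (ret p)"
    have key: "\<exists>n. g vs = 2 ^ n \<and> (\<exists>c'. run p' vs (g vs) c') \<and> c \<le> ?K * n + ?R"
      if lv: "length vs = m" and rv: "run p vs y c" for vs y c
    proof -
      obtain n c' where rn: "run p' vs (2 ^ n) c'" "c \<le> ?K * n + ?R"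
        using instrP_run[OF rv _ r1 r2, unfolded lv len] unfolding p'_def by blast
      have "g vs = 2 ^ n" unfolding g_def
        by (rule the_equality) (use rn(1) run_det in blast)+
      then show ?thesis using rn by auto
    qed
    have p'wt: "well_typed p'" unfolding p'_def by (rule instrP_wt[OF wt r1 r2])
    have p'par: "params p' = params p" unfolding p'_def instrP_def by simp
    have "computes p' g" unfolding computes_def
    proof (intro allI impI)
      fix vs :: "int list" assume "length vs = length (params p')"
      then have l: "length vs = m" using p'par len by simp
      have "length vs = length (params p)" using l len by simp
      then obtain c where "run p vs (f vs) c" using cp unfolding computes_def by blast
      then show "\<exists>c. run p' vs (g vs) c" using key[OF l] by blast
    qed
    moreover have "length (params p') = m" using p'par len by simp
    ultimately have "(m, g) \<in> FPC" unfolding FPC_def using p'wt by blast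
    then obtain C N where CN: "\<forall>vs. length vs = m \<longrightarrow> sz_ints vs \<ge> N \<longrightarrow> sz_int (g vs) \<le> C * T (sz_ints vs)"
      using assms(2) by blast
    have bound: "c \<le> (?K * C + ?R) * T (sz_ints vs)"
      if lv: "length vs = m" and sv: "sz_ints vs \<ge> max N 1" and rv: "run p vs (f vs) c" for vs c
    proof -
      obtain n where n: "g vs = 2 ^ n" "c \<le> ?K * n + ?R" using key[OF lv rv] by blast
      have "n \<le> sz_int (g vs)" using n(1) sz_pow by simp
      also have "\<dots> \<le> C * T (sz_ints vs)" using CN lv sv by simp
      finally have nb: "n \<le> C * T (sz_ints vs)" .
      have T1: "1 \<le> T (sz_ints vs)" using assms(1) sv by (meson le_trans max.boundedE)
      have "c \<le> ?K * n + ?R" by (rule n(2))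
      also have "\<dots> \<le> ?K * (C * T (sz_ints vs)) + ?R * T (sz_ints vs)"
        using nb T1 by (intro add_mono mult_le_mono2) simp_all
      also have "\<dots> = (?K * C + ?R) * T (sz_ints vs)" by (simp add: algebra_simps)
      finally show ?thesis .
    qed
    show "mf \<in> FPC_T T" unfolding mf FPC_T_def
      using wt len cp bound by blast
  qed
qed

end
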